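(* Let $(X,V)$ and $(\overline{X},\overline{V})$ be global solutions of the discrete Motsch–Tadmor model (as in the context) whose initial data satisfy \[ \max\{\|\Delta^x(0)\|_F,\|\Delta^{\overline{x}}(0)\|_F\}<M,\quad \|\Delta^v(0)\|_F<\kappa\int_{\|\Delta^x(0)\|_F}^M\psi(s)\,ds,\quad \|\Delta^{\overline{v}}(0)\|_F<\kappa\int_{\|\Delta^{\overline{x}}(0)\|_F}^M\psi(s)\,ds. \] For $i,j\in\{1,\dots,N\}$ and $n\ge0$ let \[ \mathcal{I}_2^{ij}=h\kappa\sum_{l\ne i,j}\Big[\overline{\phi}_{il}(n)\big(\Delta^v_{li}(n)-\Delta^{\overline{v}}_{li}(n)\big)-\overline{\phi}_{jl}(n)\big(\Delta^v_{lj}(n)-\Delta^{\overline{v}}_{lj}(n)\big)\Big], \] and $\alpha(n)=\max_{1\le i,j\le N}(1-\overline{\phi}_{ij}(n)-\overline{\phi}_{ii}(n))^2$. Then \[ \sum_{i,j=1}^N\|\mathcal{I}_2^{ij}\|^2\le2h^2\kappa^2\Big(\alpha(n)+\frac{L_a^2M^2}{Nc_1^2}\Big(1+\frac{c_2}{c_1}\Big)^2\Big)\|\Delta^v(n)-\Delta^{\overline{v}}(n)\|_F^2 . \]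
   Context: Discrete MT model: fix $N\ge1$, $d\ge1$, $\kappa>0$, $h>0$, and $a:[0,\infty)\to\mathbb{R}$ with constants $0<c_1\le c_2$, $c_1\le a\le c_2$, $|a(r_1)-a(r_2)|\le L_a|r_1-r_2|$ ($L_a>0$); $0<h<\min\{1,1/\kappa\}$. A solution satisfies $x_i(n+1)=x_i(n)+hv_i(n)$, $v_i(n+1)=v_i(n)+h\kappa\sum_j\phi_{ij}(n)(v_j(n)-v_i(n))$ with $\phi_{ij}(n)=\frac{a(\|x_i(n)-x_j(n)\|)}{\sum_ka(\|x_i(n)-x_k(n)\|)}$; $\overline{\phi}_{ij}(n)$ is defined likewise from $\overline{X}(n)$. Notation: $\Delta^x_{ij}=x_i-x_j$, $\Delta^v_{ij}=v_i-v_j$, similarly $\Delta^{\overline{x}},\Delta^{\overline{v}}$; $\|A\|_F=(\sum_{i,j}\|A_{ij}\|^2)^{1/2}$. Constants: $\|\phi\|_{\mathrm{Lip}}=\frac{L_a}{Nc_1}(1+\frac{c_2}{c_1})$, $M=\frac{1}{4N\|\phi\|_{\mathrm{Lip}}}$, $\psi(s)=1-\|\phi\|_{\mathrm{Lip}}Ns$. *)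

theory Defs
  imports "HOL-Analysis.Analysis"
begin

text \<open>Agents are indexed by 0..N-1 (the paper's 1..N); time steps by nat.
  A trajectory is x :: nat \<Rightarrow> nat \<Rightarrow> real^'d, x n i = position of agent i at step n.\<close>

definition Delta :: "(nat \<Rightarrow> 'a::ab_group_add) \<Rightarrow> nat \<Rightarrow> nat \<Rightarrow> 'a" where
  "Delta x i j = x i - x j"

definition frobF :: "nat \<Rightarrow> (nat \<Rightarrow> nat \<Rightarrow> real^'d) \<Rightarrow> real" where
  "frobF N A = sqrt (\<Sum>i<N. \<Sum>j<N. (norm (A i j))\<^sup>2)"

definition MT_phi :: "nat \<Rightarrow> (real \<Rightarrow> real) \<Rightarrow> (nat \<Rightarrow> real^'d) \<Rightarrow> nat \<Rightarrow> nat \<Rightarrow> real" where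
  "MT_phi N a x i j = a (norm (x i - x j)) / (\<Sum>k<N. a (norm (x i - x k)))"

definition MT_solution :: "nat \<Rightarrow> real \<Rightarrow> real \<Rightarrow> (real \<Rightarrow> real)
    \<Rightarrow> (nat \<Rightarrow> nat \<Rightarrow> real^'d) \<Rightarrow> (nat \<Rightarrow> nat \<Rightarrow> real^'d) \<Rightarrow> bool" where
  "MT_solution N h \<kappa> a x v \<longleftrightarrow>
     (\<forall>n. \<forall>i<N. x (Suc n) i = x n i + h *\<^sub>R v n i \<and>
        v (Suc n) i = v n i + (h * \<kappa>) *\<^sub>R (\<Sum>j<N. MT_phi N a (x n) i j *\<^sub>R (v n j - v n i)))"

definition phi_Lip :: "nat \<Rightarrow> real \<Rightarrow> real \<Rightarrow> real \<Rightarrow> real" where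
  "phi_Lip N La c1 c2 = La / (real N * c1) * (1 + c2 / c1)"

definition MT_M :: "nat \<Rightarrow> real \<Rightarrow> real \<Rightarrow> real \<Rightarrow> real" where
  "MT_M N La c1 c2 = 1 / (4 * real N * phi_Lip N La c1 c2)"

definition MT_psi :: "nat \<Rightarrow> real \<Rightarrow> real \<Rightarrow> real \<Rightarrow> real \<Rightarrow> real" where
  "MT_psi N La c1 c2 s = 1 - phi_Lip N La c1 c2 * real N * s"

end

theory Submission imports Defs begin

lemma frobF_L2: "frobF N A = L2_set (\<lambda>p. norm (A (fst p) (snd p))) ({..<N} \<times> {..<N})"
  unfolding frobF_def L2_set_def by (simp add: sum.cartesian_product case_prod_beta)

lemma frobF_nonneg: "frobF N A \<ge> 0"
  unfolding frobF_def by (simp add: sum_nonneg)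

lemma frobF_sq: "(frobF N A)\<^sup>2 = (\<Sum>i<N. \<Sum>j<N. (norm (A i j))\<^sup>2)"
  unfolding frobF_def by (simp add: sum_nonneg)

lemma frobF_tri:
  assumes "\<And>i j. i < N \<Longrightarrow> j < N \<Longrightarrow> norm (C i j) \<le> s * norm (A i j) + t * norm (B i j)"
    and "s \<ge> 0" "t \<ge> 0"
  shows "frobF N C \<le> s * frobF N A + t * frobF N B"
proof -
  let ?K = "{..<N} \<times> {..<N}"
  have "frobF N C \<le> L2_set (\<lambda>p. s * norm (A (fst p) (snd p)) + t * norm (B (fst p) (snd p))) ?K"
    unfolding frobF_L2 by (rule L2_set_mono) (use assms in auto)
  also have "\<dots> \<le> L2_set (\<lambda>p. s * norm (A (fst p) (snd p))) ?K + L2_set (\<lambda>p. t * norm (B (fst p) (snd p))) ?K"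
    by (rule L2_set_triangle_ineq)
  also have "\<dots> = s * frobF N A + t * frobF N B"
    unfolding frobF_L2 using assms by (simp add: L2_set_right_distrib)
  finally show ?thesis .
qed

lemma sumsq_bound:
  fixes E w :: "nat \<Rightarrow> nat \<Rightarrow> 'b::real_normed_vector" and d :: "nat \<Rightarrow> nat \<Rightarrow> real"
  assumes E: "\<And>i j. i < N \<Longrightarrow> j < N \<Longrightarrow> norm (E i j) \<le> c * d i j * (\<Sum>l<N. norm (w l i))"
    and c: "c \<ge> 0" and d: "\<And>i j. d i j \<ge> 0"
    and W: "\<And>i. i < N \<Longrightarrow> (\<Sum>l<N. (norm (w l i))\<^sup>2) \<le> W"
  shows "(\<Sum>i<N. \<Sum>j<N. (norm (E i j))\<^sup>2) \<le> c\<^sup>2 * real N * (\<Sum>i<N. \<Sum>j<N. (d i j)\<^sup>2) * W"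
proof -
  have "(norm (E i j))\<^sup>2 \<le> c\<^sup>2 * real N * (d i j)\<^sup>2 * W" if "i < N" "j < N" for i j
  proof -
    have "(norm (E i j))\<^sup>2 \<le> (c * d i j * (\<Sum>l<N. norm (w l i)))\<^sup>2"
      by (rule power_mono[OF E[OF that]]) simp
    also have "\<dots> = (c * d i j)\<^sup>2 * (\<Sum>l<N. norm (w l i))\<^sup>2"
      by (simp add: power_mult_distrib)
    also have "\<dots> \<le> (c * d i j)\<^sup>2 * ((\<Sum>l<N. (norm (w l i))\<^sup>2) * real N)"
      using sum_squared_le_sum_of_squares[of "\<lambda>l. norm (w l i)" "{..<N}"]
    by (intro mult_left_mono) auto
    also have "\<dots> \<le> (c * d i j)\<^sup>2 * (W * real N)"
      by (intro mult_left_mono mult_right_mono) (use W[OF that(1)] in auto)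
    finally show ?thesis by (simp add: power_mult_distrib mult_ac)
  qed
  then have "(\<Sum>i<N. \<Sum>j<N. (norm (E i j))\<^sup>2) \<le> (\<Sum>i<N. \<Sum>j<N. c\<^sup>2 * real N * (d i j)\<^sup>2 * W)"
    by (intro sum_mono) auto
  also have "\<dots> = c\<^sup>2 * real N * (\<Sum>i<N. \<Sum>j<N. (d i j)\<^sup>2) * W"
    by (simp add: sum_distrib_left sum_distrib_right mult_ac)
  finally show ?thesis .
qed

lemma col_le_frob:
  assumes "i < N"
  shows "(\<Sum>l<N. (norm (w l i))\<^sup>2) \<le> (frobF N w)\<^sup>2"
proof -
  have "(\<Sum>l<N. (norm (w l i))\<^sup>2) \<le> (\<Sum>l<N. \<Sum>j<N. (norm (w l j))\<^sup>2)"
    by (intro sum_mono member_le_sum) (use assms in auto)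
  then show ?thesis by (simp add: frobF_sq)
qed


lemma den_pos:
  assumes N: "N \<ge> 1" and c: "0 < c1" and a_bd: "\<And>r. r \<ge> 0 \<Longrightarrow> c1 \<le> a r \<and> a r \<le> c2"
  shows "(\<Sum>k<N. a (norm (y i - y k))) \<ge> real N * c1"
proof -
  have "(\<Sum>k<N. a (norm (y i - y k))) \<ge> (\<Sum>k<N. c1)"
    by (intro sum_mono) (use a_bd in auto)
  then show ?thesis by simp
qed

lemma phi_sum:
  assumes N: "N \<ge> 1" and c: "0 < c1" and a_bd: "\<And>r. r \<ge> 0 \<Longrightarrow> c1 \<le> a r \<and> a r \<le> c2"
  shows "(\<Sum>l<N. MT_phi N a y i l) = 1"
proof -
  have "(\<Sum>k<N. a (norm (y i - y k))) \<ge> real N * c1" by (rule den_pos[OF N c a_bd])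
  moreover have "real N * c1 > 0" using N c by simp
  ultimately show ?thesis unfolding MT_phi_def by (simp add: sum_divide_distrib[symmetric])
qed

lemma phi_nonneg:
  assumes N: "N \<ge> 1" and c: "0 < c1" and a_bd: "\<And>r. r \<ge> 0 \<Longrightarrow> c1 \<le> a r \<and> a r \<le> c2"
  shows "MT_phi N a y i l \<ge> 0"
proof -
  have "(\<Sum>k<N. a (norm (y i - y k))) \<ge> real N * c1" by (rule den_pos[OF N c a_bd])
  moreover have "real N * c1 > 0" using N c by simp
  moreover have "a (norm (y i - y l)) \<ge> 0" using a_bd[of "norm (y i - y l)"] c by auto
  ultimately show ?thesis unfolding MT_phi_def by simp
qed

lemma phi_lip:
  assumes N: "N \<ge> 1" and c: "0 < c1" "c1 \<le> c2" and a_bd: "\<And>r. r \<ge> 0 \<Longrightarrow> c1 \<le> a r \<and> a r \<le> c2"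
    and a_Lip: "\<And>r1 r2. r1 \<ge> 0 \<Longrightarrow> r2 \<ge> 0 \<Longrightarrow> \<bar>a r1 - a r2\<bar> \<le> La * \<bar>r1 - r2\<bar>"
  shows "\<bar>MT_phi N a y i l - MT_phi N a y j l\<bar> \<le> phi_Lip N La c1 c2 * norm (y i - y j)"
proof -
  define A where "A = (\<Sum>k<N. a (norm (y i - y k)))"
  define B where "B = (\<Sum>k<N. a (norm (y j - y k)))"
  define p where "p = a (norm (y i - y l))"
  define q where "q = a (norm (y j - y l))"
  define dd where "dd = norm (y i - y j)"
  have A: "A \<ge> real N * c1" unfolding A_def by (rule den_pos[OF N c(1) a_bd])
  have B: "B \<ge> real N * c1" unfolding B_def by (rule den_pos[OF N c(1) a_bd])
  have Nc: "real N * c1 > 0" using N c by simp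
  have La0: "La \<ge> 0"
  proof -
    have "\<bar>a 1 - a 0\<bar> \<le> La * \<bar>1 - 0\<bar>" by (rule a_Lip) auto
    then show ?thesis by simp
  qed
  have dist_tri: "\<bar>norm (y i - y k) - norm (y j - y k)\<bar> \<le> dd" for k
  proof -
    have "norm (y i - y k) \<le> norm (y i - y j) + norm (y j - y k)"
      using norm_triangle_ineq[of "y i - y j" "y j - y k"] by simp
    moreover have "norm (y j - y k) \<le> norm (y j - y i) + norm (y i - y k)"
      using norm_triangle_ineq[of "y j - y i" "y i - y k"] by simp
    moreover have "norm (y j - y i) = norm (y i - y j)" by (rule norm_minus_commute)
    ultimately show ?thesis unfolding dd_def by linarith
  qed
  have ak: "\<bar>a (norm (y i - y k)) - a (norm (y j - y k))\<bar> \<le> La * dd" for k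
    using a_Lip[of "norm (y i - y k)" "norm (y j - y k)"] dist_tri[of k] La0
    by (smt (verit, ccfv_SIG) mult_left_mono norm_ge_zero)
  have pq: "\<bar>p - q\<bar> \<le> La * dd" unfolding p_def q_def by (rule ak)
  have AB: "\<bar>A - B\<bar> \<le> real N * (La * dd)"
  proof -
    have "\<bar>A - B\<bar> = \<bar>\<Sum>k<N. a (norm (y i - y k)) - a (norm (y j - y k))\<bar>"
      unfolding A_def B_def by (simp add: sum_subtractf)
    also have "\<dots> \<le> (\<Sum>k<N. \<bar>a (norm (y i - y k)) - a (norm (y j - y k))\<bar>)" by (rule sum_abs)
    also have "\<dots> \<le> (\<Sum>k<N. La * dd)" by (intro sum_mono ak)
    finally show ?thesis by simp
  qed
  have q0: "0 \<le> q" "q \<le> c2" unfolding q_def using a_bd[of "norm (y j - y l)"] c by auto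
  have Apos: "A > 0" "B > 0" using A B Nc by auto
  have eq: "p / A - q / B = (p - q) / A + q * (B - A) / (A * B)"
    using Apos by (simp add: field_simps)
  have t1: "\<bar>(p - q) / A\<bar> \<le> La * dd / (real N * c1)"
  proof -
    have "\<bar>(p - q) / A\<bar> = \<bar>p - q\<bar> / A" using Apos by simp
    also have "\<dots> \<le> La * dd / A" using pq Apos by (simp add: divide_right_mono)
    also have "\<dots> \<le> La * dd / (real N * c1)"
      using A Nc La0 by (intro divide_left_mono) (auto simp: dd_def)
    finally show ?thesis .
  qed
  have t2: "\<bar>q * (B - A) / (A * B)\<bar> \<le> c2 * (real N * (La * dd)) / ((real N * c1) * (real N * c1))"
  proof -
    have "\<bar>q * (B - A) / (A * B)\<bar> = q * \<bar>A - B\<bar> / (A * B)"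
      using Apos q0 by (simp add: abs_mult abs_minus_commute)
    also have "\<dots> \<le> c2 * (real N * (La * dd)) / (A * B)"
      using Apos q0 AB by (intro divide_right_mono mult_mono) auto
    also have "\<dots> \<le> c2 * (real N * (La * dd)) / ((real N * c1) * (real N * c1))"
      using A B Nc La0 c N Apos by (intro divide_left_mono mult_mono mult_pos_pos) (auto simp: dd_def)
    finally show ?thesis .
  qed
  have "\<bar>p / A - q / B\<bar> \<le> La * dd / (real N * c1) + c2 * (real N * (La * dd)) / ((real N * c1) * (real N * c1))"
    unfolding eq by (rule order_trans[OF abs_triangle_ineq add_mono[OF t1 t2]])
  also have "\<dots> = phi_Lip N La c1 c2 * dd"
    unfolding phi_Lip_def using Nc c by (simp add: field_simps power2_eq_square)
  finally show ?thesis unfolding MT_phi_def A_def B_def p_def q_def dd_def .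
qed


lemma D_step:
  assumes sol: "MT_solution N h \<kappa> a x v" and h: "h \<ge> 0"
  shows "frobF N (Delta (x (Suc n))) \<le> frobF N (Delta (x n)) + h * frobF N (Delta (v n))"
proof -
  have "frobF N (Delta (x (Suc n))) \<le> 1 * frobF N (Delta (x n)) + h * frobF N (Delta (v n))"
  proof (rule frobF_tri)
    fix i j assume ij: "i < N" "j < N"
    have "Delta (x (Suc n)) i j = Delta (x n) i j + h *\<^sub>R Delta (v n) i j"
      using sol ij unfolding MT_solution_def Delta_def by (simp add: algebra_simps)
    then show "norm (Delta (x (Suc n)) i j) \<le> 1 * norm (Delta (x n) i j) + h * norm (Delta (v n) i j)"
      using norm_triangle_ineq[of "Delta (x n) i j" "h *\<^sub>R Delta (v n) i j"] h by simp
  qed (use h in auto)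
  then show ?thesis by simp
qed

lemma V_step:
  assumes N: "N \<ge> 1" and c: "0 < c1" "c1 \<le> c2" and a_bd: "\<And>r. r \<ge> 0 \<Longrightarrow> c1 \<le> a r \<and> a r \<le> c2"
    and a_Lip: "\<And>r1 r2. r1 \<ge> 0 \<Longrightarrow> r2 \<ge> 0 \<Longrightarrow> \<bar>a r1 - a r2\<bar> \<le> La * \<bar>r1 - r2\<bar>"
    and sol: "MT_solution N h \<kappa> a x v" and hk: "0 \<le> h * \<kappa>" "h * \<kappa> \<le> 1"
    and Lp: "phi_Lip N La c1 c2 \<ge> 0"
  shows "frobF N (Delta (v (Suc n))) \<le> (1 - h * \<kappa>) * frobF N (Delta (v n))
          + h * \<kappa> * (phi_Lip N La c1 c2 * real N * frobF N (Delta (x n)) * frobF N (Delta (v n)))"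
proof -
  define \<phi> where "\<phi> = MT_phi N a (x n)"
  define E where "E = (\<lambda>i j. \<Sum>l<N. (\<phi> i l - \<phi> j l) *\<^sub>R (v n l - v n i))"
  define Lp where "Lp = phi_Lip N La c1 c2"
  define D where "D = frobF N (Delta (x n))"
  define V where "V = frobF N (Delta (v n))"
  have ident: "Delta (v (Suc n)) i j = (1 - h * \<kappa>) *\<^sub>R Delta (v n) i j + (h * \<kappa>) *\<^sub>R E i j"
    if ij: "i < N" "j < N" for i j
  proof -
    have Sj: "(\<Sum>l<N. \<phi> j l *\<^sub>R (v n l - v n j)) =
        (\<Sum>l<N. \<phi> j l *\<^sub>R (v n l - v n i)) + (v n i - v n j)"
    proof -
      have "(\<Sum>l<N. \<phi> j l *\<^sub>R (v n l - v n j)) = (\<Sum>l<N. \<phi> j l *\<^sub>R (v n l - v n i) + \<phi> j l *\<^sub>R (v n i - v n j))"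
        by (intro sum.cong) (auto simp: algebra_simps)
      also have "\<dots> = (\<Sum>l<N. \<phi> j l *\<^sub>R (v n l - v n i)) + (\<Sum>l<N. \<phi> j l) *\<^sub>R (v n i - v n j)"
        by (simp add: sum.distrib scaleR_sum_left)
      also have "(\<Sum>l<N. \<phi> j l) = 1" unfolding \<phi>_def by (rule phi_sum[OF N c(1) a_bd])
      finally show ?thesis by simp
    qed
    have Eij: "E i j = (\<Sum>l<N. \<phi> i l *\<^sub>R (v n l - v n i)) - (\<Sum>l<N. \<phi> j l *\<^sub>R (v n l - v n i))"
      unfolding E_def by (simp add: sum_subtractf scaleR_diff_left)
    have "Delta (v (Suc n)) i j = (v n i - v n j) + (h * \<kappa>) *\<^sub>R
        ((\<Sum>l<N. \<phi> i l *\<^sub>R (v n l - v n i)) - (\<Sum>l<N. \<phi> j l *\<^sub>R (v n l - v n j)))"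
      using sol ij unfolding MT_solution_def Delta_def \<phi>_def by (simp add: algebra_simps)
    also have "\<dots> = (v n i - v n j) + (h * \<kappa>) *\<^sub>R (E i j - (v n i - v n j))"
      unfolding Sj Eij by (simp add: algebra_simps)
    finally show ?thesis unfolding Delta_def by (simp add: algebra_simps)
  qed
  have Ebound: "norm (E i j) \<le> Lp * norm (Delta (x n) i j) * (\<Sum>l<N. norm (Delta (v n) l i))"
    if ij: "i < N" "j < N" for i j
  proof -
    have "norm (E i j) \<le> (\<Sum>l<N. norm ((\<phi> i l - \<phi> j l) *\<^sub>R (v n l - v n i)))"
      unfolding E_def by (rule norm_sum)
    also have "\<dots> \<le> (\<Sum>l<N. Lp * norm (Delta (x n) i j) * norm (Delta (v n) l i))"
    proof (intro sum_mono)
      fix l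
      have "\<bar>\<phi> i l - \<phi> j l\<bar> \<le> Lp * norm (Delta (x n) i j)"
        unfolding \<phi>_def Lp_def Delta_def by (rule phi_lip[OF N c a_bd a_Lip])
      then show "norm ((\<phi> i l - \<phi> j l) *\<^sub>R (v n l - v n i)) \<le> Lp * norm (Delta (x n) i j) * norm (Delta (v n) l i)"
        unfolding Delta_def by (simp add: mult_right_mono)
    qed
    finally show ?thesis by (simp add: sum_distrib_left)
  qed
  have "(\<Sum>i<N. \<Sum>j<N. (norm (E i j))\<^sup>2) \<le> Lp\<^sup>2 * real N * (\<Sum>i<N. \<Sum>j<N. (norm (Delta (x n) i j))\<^sup>2) * V\<^sup>2"
    by (rule sumsq_bound[OF Ebound]) (auto simp: Lp_def Lp V_def intro: col_le_frob)
  also have "\<dots> = (Lp * sqrt (real N) * D * V)\<^sup>2"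
    unfolding D_def by (simp add: power_mult_distrib frobF_sq)
  finally have "(frobF N E)\<^sup>2 \<le> (Lp * sqrt (real N) * D * V)\<^sup>2" by (simp add: frobF_sq)
  then have "frobF N E \<le> Lp * sqrt (real N) * D * V"
    by (rule power2_le_imp_le) (auto simp: Lp_def Lp D_def V_def frobF_nonneg)
  also have "\<dots> \<le> Lp * real N * D * V"
  proof -
    have s1: "1 \<le> sqrt (real N)" using N by simp
    then have "sqrt (real N) * 1 \<le> sqrt (real N) * sqrt (real N)" by (intro mult_left_mono) auto
    then have "sqrt (real N) \<le> real N" by simp
    then show ?thesis using Lp by (intro mult_right_mono mult_left_mono) (auto simp: Lp_def D_def V_def frobF_nonneg)
  qed
  finally have FE: "frobF N E \<le> Lp * real N * D * V" .
  have "frobF N (Delta (v (Suc n))) \<le> (1 - h * \<kappa>) * V + (h * \<kappa>) * frobF N E"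
    unfolding V_def
  proof (rule frobF_tri)
    fix i j assume ij: "i < N" "j < N"
    show "norm (Delta (v (Suc n)) i j) \<le> (1 - h * \<kappa>) * norm (Delta (v n) i j) + h * \<kappa> * norm (E i j)"
      unfolding ident[OF ij] using norm_triangle_ineq[of "(1 - h * \<kappa>) *\<^sub>R Delta (v n) i j" "(h * \<kappa>) *\<^sub>R E i j"] hk
      by simp
  qed (use hk in auto)
  also have "\<dots> \<le> (1 - h * \<kappa>) * V + (h * \<kappa>) * (Lp * real N * D * V)"
    using FE hk by (intro add_left_mono mult_left_mono) auto
  finally show ?thesis unfolding Lp_def D_def V_def .
qed


lemma G_diff: "((y::real) - K * y\<^sup>2 / 2) - (x - K * x\<^sup>2 / 2) = (y - x) * (1 - K * (x + y) / 2)"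
  by (simp add: field_simps power2_eq_square)

lemma integral_psi:
  fixes D0 M K :: real
  assumes "D0 \<le> M"
  shows "integral {D0..M} (\<lambda>s. 1 - K * s) = (M - K * M\<^sup>2 / 2) - (D0 - K * D0\<^sup>2 / 2)"
proof -
  have "((\<lambda>s. 1 - K * s) has_integral ((M - K * M\<^sup>2 / 2) - (D0 - K * D0\<^sup>2 / 2))) {D0..M}"
  proof (rule fundamental_theorem_of_calculus[OF assms, where f = "\<lambda>s. s - K * s\<^sup>2 / 2"])
    fix s :: real
    have "((\<lambda>s. s - K * s\<^sup>2 / 2) has_real_derivative (1 - K * s)) (at s within {D0..M})"
      by (auto intro!: derivative_eq_intros)
    then show "((\<lambda>s. s - K * s\<^sup>2 / 2) has_vector_derivative (1 - K * s)) (at s within {D0..M})"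
      by (simp add: has_real_derivative_iff_has_vector_derivative)
  qed
  then show ?thesis by (rule integral_unique)
qed

lemma step_ineq:
  fixes K M D D' V V' h \<kappa> :: real
  assumes K: "K > 0" and M: "M = 1 / (4 * K)" and kappa: "\<kappa> > 0" and hk: "0 < h * \<kappa>" "h * \<kappa> < 1" "h > 0"
    and D: "0 \<le> D" "D < M" and V: "0 \<le> V" and D': "0 \<le> D'" "D' \<le> D + h * V"
    and V': "0 \<le> V'" "V' \<le> (1 - h * \<kappa>) * V + h * \<kappa> * (K * D * V)"
    and L: "V + \<kappa> * (D - K * D\<^sup>2 / 2) < \<kappa> * (M - K * M\<^sup>2 / 2)"
  shows "D' < M \<and> V' + \<kappa> * (D' - K * D'\<^sup>2 / 2) < \<kappa> * (M - K * M\<^sup>2 / 2)"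
proof -
  have KM: "K * M = 1 / 4" using M K by simp
  have KD: "K * D < 1 / 4" using D K KM by (metis mult_strict_left_mono)
  have KD0: "K * D \<ge> 0" using K D by simp
  have Gd: "\<kappa> * ((D' - K * D'\<^sup>2 / 2) - (D - K * D\<^sup>2 / 2)) \<le> h * \<kappa> * (1 - K * D) * V"
  proof (cases "D' \<ge> D")
    case True
    have "(D' - D) * (1 - K * (D + D') / 2) \<le> (D' - D) * (1 - K * D)"
      using True K by (intro mult_left_mono) (auto simp: algebra_simps)
    also have "\<dots> \<le> (h * V) * (1 - K * D)"
      using D' KD by (intro mult_right_mono) auto
    finally have "(D' - D) * (1 - K * (D + D') / 2) \<le> h * V * (1 - K * D)" .
    then have "\<kappa> * ((D' - D) * (1 - K * (D + D') / 2)) \<le> \<kappa> * (h * V * (1 - K * D))"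
      using kappa by (intro mult_left_mono) auto
    then show ?thesis unfolding G_diff by (simp add: mult_ac)
  next
    case False
    have "K * D' \<le> K * D" using False K by auto
    then have "1 - K * (D + D') / 2 \<ge> 0" using KD by (simp add: algebra_simps)
    then have "(D' - D) * (1 - K * (D + D') / 2) \<le> 0" using False by (intro mult_nonpos_nonneg) auto
    then have "\<kappa> * ((D' - D) * (1 - K * (D + D') / 2)) \<le> 0" using kappa by (simp add: mult_nonneg_nonpos)
    moreover have "h * \<kappa> * (1 - K * D) * V \<ge> 0" using hk KD V by auto
    ultimately show ?thesis unfolding G_diff by linarith
  qed
  have V'2: "V' \<le> V - h * \<kappa> * (1 - K * D) * V" using V' by (simp add: algebra_simps)
  have L': "V' + \<kappa> * (D' - K * D'\<^sup>2 / 2) < \<kappa> * (M - K * M\<^sup>2 / 2)"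
    using Gd V'2 L by (simp add: algebra_simps)
  have GD0: "D - K * D\<^sup>2 / 2 \<ge> 0"
  proof -
    have "K * D\<^sup>2 / 2 = (K * D) * D / 2" by (simp add: power2_eq_square)
    also have "\<dots> \<le> 1 * D / 2" using KD D by (intro divide_right_mono mult_right_mono) auto
    finally show ?thesis using D by simp
  qed
  have GM: "M - K * M\<^sup>2 / 2 \<le> M" using K by simp
  have "V < \<kappa> * M"
  proof -
    have "\<kappa> * (D - K * D\<^sup>2 / 2) \<ge> 0" using GD0 kappa by simp
    moreover have "\<kappa> * (M - K * M\<^sup>2 / 2) \<le> \<kappa> * M" using GM kappa by (intro mult_left_mono) auto
    ultimately show ?thesis using L by linarith
  qed
  then have "h * V < h * (\<kappa> * M)" using hk by simp
  also have "\<dots> \<le> M" using hk D by (simp add: mult_ac mult_left_le_one_le)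
  finally have D'2: "D' < 2 * M" using D' D by linarith
  have "D' < M"
  proof (rule ccontr)
    assume "\<not> D' < M"
    then have ge: "D' \<ge> M" by simp
    have "K * (M + D') < K * (3 * M)" using D'2 K by simp
    then have "1 - K * (M + D') / 2 \<ge> 0" using KM by (simp add: algebra_simps)
    then have "(D' - M) * (1 - K * (M + D') / 2) \<ge> 0" using ge by simp
    then have "(D' - K * D'\<^sup>2 / 2) - (M - K * M\<^sup>2 / 2) \<ge> 0" unfolding G_diff .
    then have "\<kappa> * (D' - K * D'\<^sup>2 / 2) \<ge> \<kappa> * (M - K * M\<^sup>2 / 2)" using kappa by (simp add: mult_left_mono)
    then show False using L' V' by linarith
  qed
  with L' show ?thesis by simp
qed


lemma sq_sum_le: "((p::real) + q)\<^sup>2 \<le> 2 * p\<^sup>2 + 2 * q\<^sup>2"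
proof -
  have "0 \<le> (p - q)\<^sup>2" by simp
  then show ?thesis by (simp add: power2_eq_square algebra_simps)
qed

theorem lemma4p5:
  fixes N :: nat and h \<kappa> c1 c2 La :: real and a :: "real \<Rightarrow> real"
    and x v xb vb :: "nat \<Rightarrow> nat \<Rightarrow> real^'d"
  assumes N: "N \<ge> 1"
    and kappa: "\<kappa> > 0"
    and h: "0 < h" "h < min 1 (1 / \<kappa>)"
    and c: "0 < c1" "c1 \<le> c2"
    and a_bd: "\<And>r. r \<ge> 0 \<Longrightarrow> c1 \<le> a r \<and> a r \<le> c2"
    and La: "La > 0"
    and a_Lip: "\<And>r1 r2. r1 \<ge> 0 \<Longrightarrow> r2 \<ge> 0 \<Longrightarrow> \<bar>a r1 - a r2\<bar> \<le> La * \<bar>r1 - r2\<bar>"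
    and sol: "MT_solution N h \<kappa> a x v"
    and solb: "MT_solution N h \<kappa> a xb vb"
    and init_x: "max (frobF N (Delta (x 0))) (frobF N (Delta (xb 0))) < MT_M N La c1 c2"
    and init_v: "frobF N (Delta (v 0)) <
        \<kappa> * integral {frobF N (Delta (x 0)) .. MT_M N La c1 c2} (MT_psi N La c1 c2)"
    and init_vb: "frobF N (Delta (vb 0)) <
        \<kappa> * integral {frobF N (Delta (xb 0)) .. MT_M N La c1 c2} (MT_psi N La c1 c2)"
  shows "(\<Sum>i<N. \<Sum>j<N. (norm (
            (h * \<kappa>) *\<^sub>R (\<Sum>l\<in>{..<N} - {i, j}.
               MT_phi N a (xb n) i l *\<^sub>R (Delta (v n) l i - Delta (vb n) l i)
             - MT_phi N a (xb n) j l *\<^sub>R (Delta (v n) l j - Delta (vb n) l j))))\<^sup>2)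
         \<le> 2 * h\<^sup>2 * \<kappa>\<^sup>2 *
            (Max ((\<lambda>(i, j). (1 - MT_phi N a (xb n) i j - MT_phi N a (xb n) i i)\<^sup>2) ` ({..<N} \<times> {..<N}))
             + La\<^sup>2 * (MT_M N La c1 c2)\<^sup>2 / (real N * c1\<^sup>2) * (1 + c2 / c1)\<^sup>2)
          * (frobF N (\<lambda>i j. Delta (v n) i j - Delta (vb n) i j))\<^sup>2"
proof -
  define Lp where "Lp = phi_Lip N La c1 c2"
  define K where "K = Lp * real N"
  define M where "M = MT_M N La c1 c2"
  define Dn where "Dn = (\<lambda>n. frobF N (Delta (xb n)))"
  define Vn where "Vn = (\<lambda>n. frobF N (Delta (vb n)))"
  have Lp: "Lp > 0" unfolding Lp_def phi_Lip_def using La c N by (auto intro!: mult_pos_pos divide_pos_pos add_pos_nonneg)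
  have K: "K > 0" unfolding K_def using Lp N by simp
  have M: "M = 1 / (4 * K)" unfolding M_def K_def Lp_def MT_M_def by (simp add: mult_ac)
  have psi: "MT_psi N La c1 c2 = (\<lambda>s. 1 - K * s)"
    unfolding K_def Lp_def MT_psi_def by (auto simp: mult_ac)
  have hk: "0 < h * \<kappa>" "h * \<kappa> < 1"
    using h kappa by (auto simp: field_simps)
  have D0: "Dn 0 < M" "Dn 0 \<ge> 0" using init_x unfolding Dn_def M_def by (auto simp: frobF_nonneg)
  have L0: "Vn 0 + \<kappa> * (Dn 0 - K * (Dn 0)\<^sup>2 / 2) < \<kappa> * (M - K * M\<^sup>2 / 2)"
    using init_vb D0 unfolding psi Vn_def Dn_def M_def[symmetric] integral_psi[OF less_imp_le[OF D0(1)[unfolded Dn_def]]]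
    by (simp add: algebra_simps)
  have inv: "Dn m < M \<and> Vn m + \<kappa> * (Dn m - K * (Dn m)\<^sup>2 / 2) < \<kappa> * (M - K * M\<^sup>2 / 2)" for m
  proof (induction m)
    case 0
    then show ?case using D0 L0 by simp
  next
    case (Suc m)
    have Vs: "Vn (Suc m) \<le> (1 - h * \<kappa>) * Vn m + h * \<kappa> * (K * Dn m * Vn m)"
      using V_step[OF N c a_bd a_Lip solb less_imp_le[OF hk(1)] less_imp_le[OF hk(2)]] Lp
      unfolding Vn_def Dn_def K_def Lp_def by (simp add: mult_ac)
    have Ds: "Dn (Suc m) \<le> Dn m + h * Vn m"
      using D_step[OF solb] h unfolding Dn_def Vn_def by simp
    show ?case
      by (rule step_ineq[OF K M kappa hk h(1)])
         (use Suc Vs Ds in \<open>auto simp: Dn_def Vn_def frobF_nonneg\<close>)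
  qed
  have DM: "frobF N (Delta (xb n)) \<le> M" using inv[of n] unfolding Dn_def by simp
  define \<phi> where "\<phi> = MT_phi N a (xb n)"
  define u where "u = (\<lambda>i j. Delta (v n) i j - Delta (vb n) i j)"
  define S where "S = (\<lambda>i j. {..<N} - {i, j})"
  define A where "A = (\<lambda>i j. \<Sum>l\<in>S i j. (\<phi> i l - \<phi> j l) *\<^sub>R u l i)"
  define \<beta> where "\<beta> = (\<lambda>i j. \<Sum>l\<in>S i j. \<phi> j l)"
  define \<alpha> where "\<alpha> = Max ((\<lambda>(i, j). (1 - \<phi> i j - \<phi> i i)\<^sup>2) ` ({..<N} \<times> {..<N}))"
  define U where "U = frobF N u"
  have ident: "(\<Sum>l\<in>S i j. \<phi> i l *\<^sub>R u l i - \<phi> j l *\<^sub>R u l j) = A i j - \<beta> i j *\<^sub>R u i j" for i j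
  proof -
    have "(\<Sum>l\<in>S i j. \<phi> i l *\<^sub>R u l i - \<phi> j l *\<^sub>R u l j)
        = (\<Sum>l\<in>S i j. (\<phi> i l - \<phi> j l) *\<^sub>R u l i - \<phi> j l *\<^sub>R u i j)"
      by (intro sum.cong) (auto simp: u_def Delta_def algebra_simps)
    then show ?thesis by (simp add: A_def \<beta>_def sum_subtractf scaleR_sum_left)
  qed
  have fin: "finite ({..<N} \<times> {..<N})" by simp
  have beta_sq: "(\<beta> i j)\<^sup>2 * (norm (u i j))\<^sup>2 \<le> \<alpha> * (norm (u i j))\<^sup>2" if ij: "i < N" "j < N" for i j
  proof (cases "i = j")
    case True
    then show ?thesis by (simp add: u_def Delta_def)
  next
    case False
    have "(\<Sum>l<N. \<phi> j l) = \<beta> i j + (\<phi> j i + \<phi> j j)"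
    proof -
      have "{..<N} = S i j \<union> {i, j}" "S i j \<inter> {i, j} = {}" using ij by (auto simp: S_def)
      then have "(\<Sum>l<N. \<phi> j l) = (\<Sum>l\<in>S i j. \<phi> j l) + (\<Sum>l\<in>{i,j}. \<phi> j l)"
        by (metis finite_Un finite_lessThan sum.union_disjoint)
      then show ?thesis using False by (simp add: \<beta>_def)
    qed
    moreover have "(\<Sum>l<N. \<phi> j l) = 1" unfolding \<phi>_def by (rule phi_sum[OF N c(1) a_bd])
    ultimately have "\<beta> i j = 1 - \<phi> j i - \<phi> j j" by simp
    then have "(\<beta> i j)\<^sup>2 \<le> \<alpha>" unfolding \<alpha>_def
      by (intro Max_ge fin finite_imageI) (use ij in \<open>force\<close>)
    then show ?thesis by (intro mult_right_mono) auto
  qed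
  have termb: "(norm ((h * \<kappa>) *\<^sub>R (A i j - \<beta> i j *\<^sub>R u i j)))\<^sup>2
      \<le> (h * \<kappa>)\<^sup>2 * (2 * (norm (A i j))\<^sup>2 + 2 * \<alpha> * (norm (u i j))\<^sup>2)" if ij: "i < N" "j < N" for i j
  proof -
    have "norm (A i j - \<beta> i j *\<^sub>R u i j) \<le> norm (A i j) + \<bar>\<beta> i j\<bar> * norm (u i j)"
      using norm_triangle_ineq4[of "A i j" "\<beta> i j *\<^sub>R u i j"] by simp
    then have "(norm (A i j - \<beta> i j *\<^sub>R u i j))\<^sup>2 \<le> (norm (A i j) + \<bar>\<beta> i j\<bar> * norm (u i j))\<^sup>2"
      by (intro power_mono) auto
    also have "\<dots> \<le> 2 * (norm (A i j))\<^sup>2 + 2 * (\<bar>\<beta> i j\<bar> * norm (u i j))\<^sup>2"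
      by (rule sq_sum_le)
    also have "\<dots> \<le> 2 * (norm (A i j))\<^sup>2 + 2 * (\<alpha> * (norm (u i j))\<^sup>2)"
      using beta_sq[OF ij] by (simp add: power_mult_distrib)
    finally have fin2: "(norm (A i j - \<beta> i j *\<^sub>R u i j))\<^sup>2 \<le> 2 * (norm (A i j))\<^sup>2 + 2 * \<alpha> * (norm (u i j))\<^sup>2"
      by (simp add: mult_ac)
    have "(norm ((h * \<kappa>) *\<^sub>R (A i j - \<beta> i j *\<^sub>R u i j)))\<^sup>2 = (h * \<kappa>)\<^sup>2 * (norm (A i j - \<beta> i j *\<^sub>R u i j))\<^sup>2"
      by (simp only: norm_scaleR power_mult_distrib power2_abs)
    also have "\<dots> \<le> (h * \<kappa>)\<^sup>2 * (2 * (norm (A i j))\<^sup>2 + 2 * \<alpha> * (norm (u i j))\<^sup>2)"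
      by (rule mult_left_mono[OF fin2]) simp
    finally show ?thesis .
  qed
  have Abound: "norm (A i j) \<le> Lp * norm (Delta (xb n) i j) * (\<Sum>l<N. norm (u l i))"
    if ij: "i < N" "j < N" for i j
  proof -
    have "norm (A i j) \<le> (\<Sum>l\<in>S i j. norm ((\<phi> i l - \<phi> j l) *\<^sub>R u l i))"
      unfolding A_def by (rule norm_sum)
    also have "\<dots> \<le> (\<Sum>l\<in>S i j. Lp * norm (Delta (xb n) i j) * norm (u l i))"
    proof (intro sum_mono)
      fix l
      have "\<bar>\<phi> i l - \<phi> j l\<bar> \<le> Lp * norm (Delta (xb n) i j)"
        unfolding \<phi>_def Lp_def Delta_def by (rule phi_lip[OF N c a_bd a_Lip])
      then show "norm ((\<phi> i l - \<phi> j l) *\<^sub>R u l i) \<le> Lp * norm (Delta (xb n) i j) * norm (u l i)"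
        by (simp add: mult_right_mono)
    qed
    also have "\<dots> \<le> (\<Sum>l<N. Lp * norm (Delta (xb n) i j) * norm (u l i))"
      using Lp by (intro sum_mono2) (auto simp: S_def)
    finally show ?thesis by (simp add: sum_distrib_left)
  qed
  have SA: "(\<Sum>i<N. \<Sum>j<N. (norm (A i j))\<^sup>2) \<le> Lp\<^sup>2 * real N * (\<Sum>i<N. \<Sum>j<N. (norm (Delta (xb n) i j))\<^sup>2) * U\<^sup>2"
    by (rule sumsq_bound[OF Abound]) (auto simp: Lp U_def less_imp_le intro: col_le_frob)
  also have "\<dots> = Lp\<^sup>2 * real N * (frobF N (Delta (xb n)))\<^sup>2 * U\<^sup>2" by (simp add: frobF_sq)
  also have "\<dots> \<le> Lp\<^sup>2 * real N * M\<^sup>2 * U\<^sup>2"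
    using DM by (intro mult_right_mono mult_left_mono power_mono) (auto simp: frobF_nonneg)
  finally have SA: "(\<Sum>i<N. \<Sum>j<N. (norm (A i j))\<^sup>2) \<le> Lp\<^sup>2 * real N * M\<^sup>2 * U\<^sup>2" .
  have "(\<Sum>i<N. \<Sum>j<N. (norm ((h * \<kappa>) *\<^sub>R (\<Sum>l\<in>S i j. \<phi> i l *\<^sub>R u l i - \<phi> j l *\<^sub>R u l j)))\<^sup>2)
      \<le> (\<Sum>i<N. \<Sum>j<N. (h * \<kappa>)\<^sup>2 * (2 * (norm (A i j))\<^sup>2 + 2 * \<alpha> * (norm (u i j))\<^sup>2))"
    unfolding ident by (intro sum_mono termb) auto
  also have "\<dots> = (h * \<kappa>)\<^sup>2 * (2 * (\<Sum>i<N. \<Sum>j<N. (norm (A i j))\<^sup>2) + 2 * \<alpha> * U\<^sup>2)"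
    by (simp add: U_def frobF_sq sum.distrib sum_distrib_left distrib_left)
  also have "\<dots> \<le> (h * \<kappa>)\<^sup>2 * (2 * (Lp\<^sup>2 * real N * M\<^sup>2 * U\<^sup>2) + 2 * \<alpha> * U\<^sup>2)"
    using SA by (intro mult_left_mono add_right_mono) auto
  also have "\<dots> = 2 * h\<^sup>2 * \<kappa>\<^sup>2 * (\<alpha> + La\<^sup>2 * M\<^sup>2 / (real N * c1\<^sup>2) * (1 + c2 / c1)\<^sup>2) * U\<^sup>2"
  proof -
    have "Lp\<^sup>2 * real N = La\<^sup>2 / (real N * c1\<^sup>2) * (1 + c2 / c1)\<^sup>2"
      unfolding Lp_def phi_Lip_def using N c by (simp add: field_simps power2_eq_square)
    then show ?thesis by (simp add: algebra_simps power_mult_distrib)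
  qed
  finally show ?thesis unfolding \<phi>_def u_def S_def \<alpha>_def U_def M_def .
qed

end
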